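(* Let $F$ be an augmentation of a tree $T$. Then $\mathrm{ex}(n,F^3)\le 3(|T|+1)n^2$ for all sufficiently large $n$.
   Context: $|T|$ is the number of edges of $T$. A graph $F$ is an augmentation of a tree $T$ if $F$ is obtained from $T$ by adding one new edge (whose endpoints need not lie in $V(T)$). The expansion $F^3$ is the $3$-graph obtained from $F$ by adding to each edge a new vertex, distinct edges receiving distinct new vertices. $\mathrm{ex}(n,F^3)$ is the maximum number of edges in an $n$-vertex $3$-graph containing no copy of $F^3$. *)

theory Defs
  imports Main
begin

definition graph_on :: "'a set \<Rightarrow> 'a set set \<Rightarrow> bool" where
  "graph_on V E \<longleftrightarrow> finite V \<and> E \<subseteq> {e. e \<subseteq> V \<and> card e = 2}"

definition walk :: "'a set set \<Rightarrow> 'a list \<Rightarrow> bool" where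
  "walk E xs \<longleftrightarrow> (\<forall>i < length xs - 1. {xs ! i, xs ! (i + 1)} \<in> E)"

definition connected_graph :: "'a set \<Rightarrow> 'a set set \<Rightarrow> bool" where
  "connected_graph V E \<longleftrightarrow>
     (\<forall>u\<in>V. \<forall>v\<in>V. \<exists>xs. xs \<noteq> [] \<and> hd xs = u \<and> last xs = v \<and> walk E xs)"

definition has_cycle :: "'a set set \<Rightarrow> bool" where
  "has_cycle E \<longleftrightarrow>
     (\<exists>xs. length xs \<ge> 3 \<and> distinct xs \<and> walk E xs \<and> {last xs, hd xs} \<in> E)"

definition is_tree :: "'a set \<Rightarrow> 'a set set \<Rightarrow> bool" where
  "is_tree V E \<longleftrightarrow> graph_on V E \<and> V \<noteq> {} \<and> connected_graph V E \<and> \<not> has_cycle E"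

definition is_augmentation ::
  "'a set \<Rightarrow> 'a set set \<Rightarrow> 'a set \<Rightarrow> 'a set set \<Rightarrow> bool" where
  "is_augmentation V E VF EF \<longleftrightarrow>
     (\<exists>e. card e = 2 \<and> e \<notin> E \<and> VF = V \<union> e \<and> EF = insert e E)"

text \<open>The 3-expansion: each edge e receives its own new vertex Inr e.\<close>
definition exp3_vertices :: "'a set \<Rightarrow> 'a set set \<Rightarrow> ('a + 'a set) set" where
  "exp3_vertices V E = Inl ` V \<union> Inr ` E"

definition exp3_edges :: "'a set set \<Rightarrow> ('a + 'a set) set set" where
  "exp3_edges E = (\<lambda>e. insert (Inr e) (Inl ` e)) ` E"

definition contains_copy :: "'b set \<Rightarrow> 'b set set \<Rightarrow> 'c set \<Rightarrow> 'c set set \<Rightarrow> bool" where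
  "contains_copy VH H VG G \<longleftrightarrow>
     (\<exists>f. inj_on f VG \<and> f ` VG \<subseteq> VH \<and> (\<forall>g\<in>G. f ` g \<in> H))"

definition three_graph_on :: "nat \<Rightarrow> nat set set \<Rightarrow> bool" where
  "three_graph_on n H \<longleftrightarrow> H \<subseteq> {g. g \<subseteq> {..<n} \<and> card g = 3}"

definition ex3 :: "nat \<Rightarrow> 'c set \<Rightarrow> 'c set set \<Rightarrow> nat" where
  "ex3 n VG G = Max {card H | H. three_graph_on n H \<and> \<not> contains_copy {..<n} H VG G}"

end

theory Submission
  imports Defs
begin


lemma walk_snoc: "walk E xs \<Longrightarrow> xs \<noteq> [] \<Longrightarrow> {last xs, w} \<in> E \<Longrightarrow> walk E (xs @ [w])"
  unfolding walk_def
proof (intro allI impI)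
  fix i assume W: "\<forall>i<length xs - 1. {xs ! i, xs ! (i + 1)} \<in> E" and ne: "xs \<noteq> []"
    and l: "{last xs, w} \<in> E" and i: "i < length (xs @ [w]) - 1"
  show "{(xs @ [w]) ! i, (xs @ [w]) ! (i + 1)} \<in> E"
  proof (cases "i < length xs - 1")
    case True
    then have "i + 1 < length xs" by simp
    then show ?thesis using W True by (simp add: nth_append)
  next
    case False
    then have "i = length xs - 1" using i by simp
    then show ?thesis using l ne by (simp add: nth_append last_conv_nth)
  qed
qed

lemma walk_drop: "walk E xs \<Longrightarrow> walk E (drop j xs)"
  unfolding walk_def by (auto simp: add.assoc)

lemma degenerate:
  assumes nc: "\<not> has_cycle E" and E2: "\<forall>g\<in>E. card g = 2"
    and U: "finite U" "U \<noteq> {}"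
  shows "\<exists>v\<in>U. \<forall>w1 w2. w1 \<in> U \<longrightarrow> w2 \<in> U \<longrightarrow> {v,w1} \<in> E \<longrightarrow> {v,w2} \<in> E \<longrightarrow> w1 = w2"
proof (rule ccontr)
  assume A: "\<not> ?thesis"
  define P where "P = (\<lambda>xs. xs \<noteq> [] \<and> distinct xs \<and> set xs \<subseteq> U \<and> walk E xs)"
  obtain u where u: "u \<in> U" using U by auto
  have Pu: "P [u]" using u by (simp add: P_def walk_def)
  have bnd: "\<forall>ys. P ys \<longrightarrow> length ys \<le> card U"
    by (metis P_def U(1) card_mono distinct_card)
  have "\<exists>xs. P xs \<and> (\<forall>ys. P ys \<longrightarrow> length ys \<le> length xs)"
    by (rule Lattices_Big.ex_has_greatest_nat[where k="[u]" and b="card U + 1"]) (use Pu bnd in auto)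
  then obtain xs where Pxs: "P xs" and mx: "\<And>ys. P ys \<Longrightarrow> length ys \<le> length xs"
    by blast
  have ne: "xs \<noteq> []" and dx: "distinct xs" and sx: "set xs \<subseteq> U" and wx: "walk E xs"
    using Pxs by (auto simp: P_def)
  define l where "l = last xs"
  have lU: "l \<in> U" using ne sx l_def by auto
  obtain w1 w2 where w: "w1 \<in> U" "w2 \<in> U" "{l,w1} \<in> E" "{l,w2} \<in> E" "w1 \<noteq> w2"
    using A lU by blast
  have inxs: "w \<in> set xs" if "w \<in> U" "{l,w} \<in> E" for w
  proof (rule ccontr)
    assume "w \<notin> set xs"
    then have "P (xs @ [w])" using that ne dx sx wx walk_snoc[of E xs w] l_def by (auto simp: P_def)
    then show False using mx[of "xs @ [w]"] by simp
  qed
  have nl: "w \<noteq> l" if "{l,w} \<in> E" for w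
    using that E2 by fastforce
  define len where "len = length xs"
  have lastn: "xs ! (len - 1) = l" using ne by (simp add: l_def len_def last_conv_nth)
  obtain j1 where j1: "j1 < len" "xs ! j1 = w1" using inxs[OF w(1) w(3)] by (auto simp: in_set_conv_nth len_def)
  obtain j2 where j2: "j2 < len" "xs ! j2 = w2" using inxs[OF w(2) w(4)] by (auto simp: in_set_conv_nth len_def)
  have "j1 \<noteq> len - 1" using j1 lastn nl[OF w(3)] by auto
  have "j2 \<noteq> len - 1" using j2 lastn nl[OF w(4)] by auto
  have "j1 \<noteq> j2" using j1 j2 w(5) by auto
  obtain j w where jw: "j + 3 \<le> len" "xs ! j = w" "{l,w} \<in> E"
  proof (cases "j1 = len - 2")
    case True
    then show ?thesis using that[of j2 w2] j2 w \<open>j2 \<noteq> len - 1\<close> \<open>j1 \<noteq> j2\<close> by linarith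
  next
    case False
    then show ?thesis using that[of j1 w1] j1 w \<open>j1 \<noteq> len - 1\<close> by linarith
  qed
  let ?c = "drop j xs"
  have "length ?c \<ge> 3" using jw len_def by simp
  moreover have "distinct ?c" using dx by simp
  moreover have "walk E ?c" using wx walk_drop by blast
  moreover have "last ?c = l" using jw len_def l_def by simp
  moreover have "hd ?c = w" using jw len_def by (simp add: hd_drop_conv_nth)
  ultimately have "has_cycle E" unfolding has_cycle_def using jw(3) by metis
  then show False using nc by simp
qed

lemma pick: "finite B \<Longrightarrow> card B < card C \<Longrightarrow> \<exists>z\<in>C. z \<notin> B"
  by (meson card_mono leD subsetI)

lemma greedy:
  assumes "finite I" "finite B"
  shows "(\<forall>i\<in>I. card I + card B \<le> card (A i)) \<Longrightarrow> \<exists>c. inj_on c I \<and> (\<forall>i\<in>I. c i \<in> A i \<and> c i \<notin> B)"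
  using assms(1)
proof (induction I rule: finite_induct)
  case empty
  then show ?case by simp
next
  case (insert i I)
  have "\<forall>j\<in>I. card I + card B \<le> card (A j)" using insert by auto
  then obtain c where c: "inj_on c I" "\<forall>j\<in>I. c j \<in> A j \<and> c j \<notin> B" using insert.IH by blast
  have "card (B \<union> c ` I) \<le> card B + card I" by (metis card_Un_le card_image_le insert.hyps(1) add_le_mono order.trans le_refl)
  also have "\<dots> < card (A i)" using insert by auto
  finally obtain z where z: "z \<in> A i" "z \<notin> B \<union> c ` I"
    using pick[of "B \<union> c ` I" "A i"] assms(2) insert.hyps(1) by auto
  show ?case
  proof (intro exI[of _ "c(i := z)"] conjI)
    show "inj_on (c(i := z)) (insert i I)"
      using c(1) z insert.hyps(2) by (auto simp: inj_on_def)
    show "\<forall>j\<in>insert i I. (c(i := z)) j \<in> A j \<and> (c(i := z)) j \<notin> B"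
      using c z insert.hyps(2) by auto
  qed
qed



definition Lk :: "nat set set \<Rightarrow> nat set \<Rightarrow> nat set" where
  "Lk H p = {z. insert z p \<in> H}"

definition good :: "nat \<Rightarrow> nat set set \<Rightarrow> bool" where
  "good m H \<longleftrightarrow> (\<forall>h\<in>H. \<forall>p. p \<subseteq> h \<longrightarrow> card p = 2 \<longrightarrow> m \<le> card (Lk H p))"

definition pairs :: "nat set set \<Rightarrow> nat set set" where
  "pairs H = {p. card p = 2 \<and> (\<exists>h\<in>H. p \<subseteq> h)}"

lemma Lk_finite: "finite H \<Longrightarrow> \<forall>h\<in>H. card h = 3 \<Longrightarrow> finite (Lk H p)"
proof -
  assume f: "finite H" and c: "\<forall>h\<in>H. card h = 3"
  have "Lk H p \<subseteq> \<Union>H" unfolding Lk_def by auto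
  moreover have "finite (\<Union>H)" using f c by (intro finite_Union) (auto intro: card_ge_0_finite)
  ultimately show ?thesis by (rule finite_subset)
qed

lemma deletion:
  fixes m :: nat
  shows "finite H \<Longrightarrow> \<forall>h\<in>H. card h = 3 \<Longrightarrow>
    \<exists>H'. H' \<subseteq> H \<and> good m H' \<and> card H \<le> card H' + m * card (pairs H)"
proof (induction "card H" arbitrary: H rule: less_induct)
  case less
  show ?case
  proof (cases "good m H")
    case True
    then show ?thesis by auto
  next
    case False
    then obtain h p where hp: "h \<in> H" "p \<subseteq> h" "card p = 2" "card (Lk H p) < m"
      unfolding good_def by auto
    define R where "R = {h'\<in>H. p \<subseteq> h'}"
    define H1 where "H1 = H - R"
    have finU: "finite (\<Union>H)" using less.prems by (intro finite_Union) (auto intro: card_ge_0_finite)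
    have R_sub: "R \<subseteq> (\<lambda>z. insert z p) ` Lk H p"
    proof
      fix h' assume "h' \<in> R"
      then have h': "h' \<in> H" "p \<subseteq> h'" by (auto simp: R_def)
      have "card h' = 3" using h' less.prems by auto
      have "finite p" using hp(3) card.infinite by fastforce
      then have "card (h' - p) = 1" using hp(3) h'(2) \<open>card h' = 3\<close>
        by (simp add: card_Diff_subset)
      then obtain z where z: "h' - p = {z}" by (meson card_1_singletonE)
      then have "h' = insert z p" using h'(2) by auto
      then show "h' \<in> (\<lambda>z. insert z p) ` Lk H p" using h'(1) by (auto simp: Lk_def)
    qed
    have "card R \<le> card (Lk H p)"
    proof -
      have fL: "finite (Lk H p)" using Lk_finite less.prems by blast
      have "card R \<le> card ((\<lambda>z. insert z p) ` Lk H p)" using R_sub fL card_mono finite_imageI by blast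
      also have "\<dots> \<le> card (Lk H p)" using card_image_le fL by blast
      finally show ?thesis .
    qed
    then have cR: "card R \<le> m" using hp(4) by simp
    have RH: "R \<subseteq> H" by (auto simp: R_def)
    have cH: "card H = card H1 + card R"
    proof -
      have fR: "finite R" using RH less.prems(1) finite_subset by blast
      have "card R \<le> card H" using RH less.prems(1) card_mono by blast
      then show ?thesis unfolding H1_def using card_Diff_subset[OF fR RH] by simp
    qed
    have "h \<in> R" using hp by (auto simp: R_def)
    moreover have "finite R" using RH less.prems(1) finite_subset by blast
    ultimately have "card R > 0" using card_gt_0_iff by blast
    then have lt: "card H1 < card H" using cH by simp
    have fH1: "finite H1" "\<forall>h\<in>H1. card h = 3" using less.prems by (auto simp: H1_def)
    obtain H' where H': "H' \<subseteq> H1" "good m H'" "card H1 \<le> card H' + m * card (pairs H1)"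
      using less.hyps[OF lt fH1] by blast
    have finP: "finite (pairs H)"
    proof -
      have "pairs H \<subseteq> Pow (\<Union>H)" unfolding pairs_def by auto
      then show ?thesis using finU by (meson finite_Pow_iff finite_subset)
    qed
    have "pairs H1 \<subseteq> pairs H - {p}" unfolding pairs_def H1_def R_def by auto
    moreover have "p \<in> pairs H" using hp unfolding pairs_def by auto
    ultimately have "card (pairs H1) < card (pairs H)"
      using finP by (intro psubset_card_mono) auto
    then have "card (pairs H1) + 1 \<le> card (pairs H)" by simp
    then have "m * card (pairs H1) + m \<le> m * card (pairs H)"
      using mult_le_mono2[of "card (pairs H1) + 1" "card (pairs H)" m] by (simp add: algebra_simps)
    then have "card H \<le> card H' + m * card (pairs H)" using H'(3) cH cR by linarith
    then show ?thesis using H' H1_def by auto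
  qed
qed



lemma card3_distinct: "card (insert z {x,y}) = 3 \<Longrightarrow> x \<noteq> y \<and> x \<noteq> z \<and> y \<noteq> z"
  by (cases "x = y"; cases "x = z"; cases "y = z"; simp add: card_insert_if)

lemma tri_distinct: "\<forall>h\<in>H. card h = 3 \<Longrightarrow> insert z {x,y} \<in> H \<Longrightarrow> x \<noteq> y \<and> x \<noteq> z \<and> y \<noteq> z"
  using card3_distinct[of z x y] by simp

lemma good_tri:
  assumes "good m H" "\<forall>h\<in>H. card h = 3" "insert z {x,y} \<in> H"
  shows "m \<le> card (Lk H {x,y})"
proof -
  have "x \<noteq> y" using tri_distinct[OF assms(2,3)] by simp
  then have "card {x,y} = 2" by simp
  then show ?thesis using assms(1,3) unfolding good_def by blast
qed

lemma Lk_nonempty_card: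
  assumes "good m H" "\<forall>h\<in>H. card h = 3" "Lk H {x,y} \<noteq> {}"
  shows "m \<le> card (Lk H {x,y})"
proof -
  obtain z where "insert z {x,y} \<in> H" using assms(3) by (auto simp: Lk_def)
  then show ?thesis using good_tri[OF assms(1,2)] by blast
qed

lemma Lk_rot: "z \<in> Lk H {x,y} \<Longrightarrow> x \<in> Lk H {z,y}"
  unfolding Lk_def by (simp add: insert_commute)

lemma Lk_rot2: "z \<in> Lk H {x,y} \<Longrightarrow> y \<in> Lk H {z,x}"
  unfolding Lk_def by (simp add: insert_commute)

lemma Lk_sym: "Lk H {x,y} = Lk H {y,x}"
  by (simp add: insert_commute)

lemma embed:
  assumes nc: "\<not> has_cycle E" and E2: "\<forall>g\<in>E. card g = 2"
    and gd: "good m H" and H3: "\<forall>h\<in>H. card h = 3" and fin: "finite H"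
    and h0: "z0 \<in> Lk H {x0,y0}"
  shows "finite U \<Longrightarrow> card U < m \<Longrightarrow> \<exists>\<phi>. inj_on \<phi> U \<and>
     (\<forall>u\<in>U. Lk H {\<phi> u, y0} \<noteq> {} \<and> \<phi> u \<noteq> y0) \<and>
     (\<forall>u\<in>U. \<forall>w\<in>U. {u,w} \<in> E \<longrightarrow> Lk H {\<phi> u, \<phi> w} \<noteq> {})"
proof (induction "card U" arbitrary: U rule: less_induct)
  case less
  show ?case
  proof (cases "U = {}")
    case True
    then show ?thesis by simp
  next
    case False
    obtain v where v: "v \<in> U" and vdeg: "\<And>w1 w2. w1 \<in> U \<Longrightarrow> w2 \<in> U \<Longrightarrow> {v,w1} \<in> E \<Longrightarrow> {v,w2} \<in> E \<Longrightarrow> w1 = w2"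
      using degenerate[OF nc E2 less.prems(1) False] by blast
    define U' where "U' = U - {v}"
    have cU': "card U' < card U" using v less.prems(1) unfolding U'_def by (intro card_Diff1_less)
    have fU': "finite U'" using less.prems(1) U'_def by simp
    obtain \<phi> where ph: "inj_on \<phi> U'" "\<forall>u\<in>U'. Lk H {\<phi> u, y0} \<noteq> {} \<and> \<phi> u \<noteq> y0"
      "\<forall>u\<in>U'. \<forall>w\<in>U'. {u,w} \<in> E \<longrightarrow> Lk H {\<phi> u, \<phi> w} \<noteq> {}"
      using less.hyps[OF cU' fU'] cU' less.prems(2) by auto
    have vnot: "{v,v} \<notin> E" using E2 by fastforce
    obtain a where a: "m \<le> card (Lk H {a, y0})"
      and aw: "\<And>w. w \<in> U \<Longrightarrow> {v,w} \<in> E \<Longrightarrow> w \<in> U' \<and> a = \<phi> w"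
    proof (cases "\<exists>w\<in>U. {v,w} \<in> E")
      case True
      then obtain w where w: "w \<in> U" "{v,w} \<in> E" by blast
      have wU': "w \<in> U'" using w vnot U'_def by auto
      have "m \<le> card (Lk H {\<phi> w, y0})" using Lk_nonempty_card[OF gd H3] ph(2) wU' by blast
      moreover have "w' \<in> U' \<and> \<phi> w = \<phi> w'" if "w' \<in> U" "{v,w'} \<in> E" for w'
        using vdeg[OF w(1) that(1) w(2) that(2)] wU' by simp
      ultimately show ?thesis using that by blast
    next
      case False
      have "m \<le> card (Lk H {x0, y0})" using Lk_nonempty_card[OF gd H3] h0 by blast
      then show ?thesis using that False by blast
    qed
    have "card (\<phi> ` U' \<union> {y0}) \<le> card (\<phi> ` U') + card {y0}" by (rule card_Un_le)
    also have "\<dots> \<le> card U' + 1" using card_image_le[OF fU', of \<phi>] by simp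
    also have "\<dots> = card U" using cU' v less.prems(1) U'_def by simp
    also have "\<dots> < m" using less.prems(2) .
    finally obtain z where z: "z \<in> Lk H {a, y0}" "z \<notin> \<phi> ` U' \<union> {y0}"
      using pick[of "\<phi> ` U' \<union> {y0}" "Lk H {a,y0}"] fU' a by auto
    define \<psi> where "\<psi> = \<phi>(v := z)"
    have psiU': "\<And>u. u \<in> U' \<Longrightarrow> \<psi> u = \<phi> u" using U'_def \<psi>_def by auto
    have psiv: "\<psi> v = z" by (simp add: \<psi>_def)
    have Uins: "U = insert v U'" using v U'_def by auto
    show ?thesis
    proof (intro exI[of _ \<psi>] conjI ballI impI)
      show "inj_on \<psi> U"
        unfolding Uins \<psi>_def using ph(1) z(2) U'_def
        by (auto simp: inj_on_def)
    next
      fix u assume u: "u \<in> U"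
      show "Lk H {\<psi> u, y0} \<noteq> {}"
      proof (cases "u = v")
        case True
        have "a \<in> Lk H {z, y0}" using Lk_rot[OF z(1)] .
        then show ?thesis using True psiv by auto
      next
        case False
        then show ?thesis using ph(2) psiU' u U'_def by auto
      qed
      show "\<psi> u \<noteq> y0"
        using ph(2) psiU' u U'_def z(2) psiv by (cases "u = v") auto
    next
      fix u w assume uw: "u \<in> U" "w \<in> U" "{u,w} \<in> E"
      show "Lk H {\<psi> u, \<psi> w} \<noteq> {}"
      proof (cases "u = v")
        case True
        then have "w \<noteq> v" using uw vnot by auto
        then have "w \<in> U'" "a = \<phi> w" using aw[of w] uw True by auto
        then have "y0 \<in> Lk H {z, \<psi> w}" using Lk_rot2[OF z(1)] psiU' by auto
        then show ?thesis using True psiv by auto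
      next
        case False
        note uv = False
        show ?thesis
        proof (cases "w = v")
          case True
          have "{v,u} \<in> E" using uw True by (simp add: insert_commute)
          then have "u \<in> U'" "a = \<phi> u" using aw[of u] uw by auto
          then have "y0 \<in> Lk H {z, \<psi> u}" using Lk_rot2[OF z(1)] psiU' by auto
          then show ?thesis using True psiv Lk_sym[of H z "\<psi> u"] by auto
        next
          case False
          then show ?thesis using uv uw ph(3) psiU' U'_def by auto
        qed
      qed
    qed
  qed
qed



lemma card_V_bound:
  assumes "is_tree V E"
  shows "card V \<le> 2 * card E + 1"
proof (cases "card V \<le> 1")
  case True
  then show ?thesis by simp
next
  case False
  have gV: "finite V" "E \<subseteq> {e. e \<subseteq> V \<and> card e = 2}" and cV: "connected_graph V E"
    using assms unfolding is_tree_def graph_on_def by auto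
  have "V \<subseteq> \<Union>E"
  proof
    fix u assume u: "u \<in> V"
    have "\<not> V \<subseteq> {u}"
    proof
      assume "V \<subseteq> {u}"
      then have "card V \<le> card {u}" by (intro card_mono) auto
      then show False using False by simp
    qed
    then obtain v where v: "v \<in> V" "v \<noteq> u" by blast
    obtain xs where xs: "xs \<noteq> []" "hd xs = u" "last xs = v" "walk E xs"
      using cV u v unfolding connected_graph_def by blast
    have "length xs \<noteq> 1"
    proof
      assume "length xs = 1"
      then obtain x where "xs = [x]" by (metis length_0_conv length_Suc_conv One_nat_def)
      then show False using xs v by simp
    qed
    then have l2: "0 < length xs - 1" using xs(1) by (cases xs) auto
    then have "{xs ! 0, xs ! 1} \<in> E" using xs(4) unfolding walk_def by auto
    moreover have "xs ! 0 = u" using xs(1,2) by (simp add: hd_conv_nth)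
    ultimately show "u \<in> \<Union>E" by blast
  qed
  then have "card V \<le> card (\<Union>E)"
  proof -
    have "finite (\<Union>E)" using gV finite_subset[of "\<Union>E" V] by blast
    then show ?thesis using \<open>V \<subseteq> \<Union>E\<close> card_mono by blast
  qed
  also have "\<dots> \<le> sum card E" by (rule card_Union_le_sum_card)
  also have "\<dots> = 2 * card E"
  proof -
    have "sum card E = sum (\<lambda>_. 2) E" using gV(2) by (intro sum.cong) auto
    then show ?thesis by simp
  qed
  finally show ?thesis by simp
qed



lemma pairs_card:
  assumes "three_graph_on n H"
  shows "card (pairs H) \<le> n choose 2"
proof -
  have "pairs H \<subseteq> {p. p \<subseteq> {..<n} \<and> card p = 2}"
    using assms unfolding pairs_def three_graph_on_def by auto
  then have "card (pairs H) \<le> card {p. p \<subseteq> {..<n} \<and> card p = 2}"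
    by (intro card_mono) auto
  also have "\<dots> = n choose 2" using n_subsets[of "{..<n}" 2] by simp
  finally show ?thesis .
qed

lemma arith_bound:
  fixes m k n :: nat
  assumes "m \<le> 6 * (k + 1)"
  shows "m * (n choose 2) \<le> 3 * (k + 1) * n ^ 2"
proof -
  have d: "\<forall>x::nat. 2 * (x div 2) \<le> x" by presburger
  have "2 * (n choose 2) \<le> n * (n - 1)" unfolding choose_two using d by blast
  also have "\<dots> \<le> n * n" by simp
  finally have "2 * (n choose 2) \<le> n * n" .
  then have "m * (2 * (n choose 2)) \<le> 6 * (k + 1) * (n * n)"
    using assms mult_le_mono by blast
  then show ?thesis by (simp add: power2_eq_square algebra_simps)
qed



lemma copy_exists:
  fixes V VF :: "'a set" and E EF :: "'a set set"
  assumes tree: "is_tree V E" and aug: "is_augmentation V E VF EF"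
    and H: "three_graph_on n H" and big: "3 * (card E + 1) * n ^ 2 < card H"
  shows "contains_copy {..<n} H (exp3_vertices VF EF) (exp3_edges EF)"
proof -
  define k where "k = card E"
  have gV: "finite V" "E \<subseteq> {e. e \<subseteq> V \<and> card e = 2}" and nc: "\<not> has_cycle E"
    using tree unfolding is_tree_def graph_on_def by auto
  have E2: "\<forall>g\<in>E. card g = 2" using gV by auto
  have "E \<subseteq> Pow V" using gV by auto
  then have finE: "finite E" using gV(1) finite_subset by auto
  obtain e where e: "card e = 2" "e \<notin> E" "VF = V \<union> e" "EF = insert e E"
    using aug unfolding is_augmentation_def by blast
  obtain a b where ab: "e = {a,b}" "a \<noteq> b" using e(1) card_2_iff by metis
  have finVF: "finite VF" using e ab gV by simp
  have finEF: "finite EF" using e finE by simp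
  have cEF: "card EF = k + 1" using e finE k_def by simp
  have "card VF \<le> card V + card e" using e(3) card_Un_le by metis
  then have cVF: "card VF \<le> 2 * k + 3" using card_V_bound[OF tree] e(1) k_def by simp
  define m where "m = card VF + card EF"
  have m6: "m \<le> 6 * (k + 1)" using cVF cEF m_def by simp
  have finH: "finite H"
  proof -
    have "H \<subseteq> Pow {..<n}" using H unfolding three_graph_on_def by auto
    then show ?thesis by (rule finite_subset) simp
  qed
  have H3: "\<forall>h\<in>H. card h = 3" using H unfolding three_graph_on_def by auto
  obtain H' where H': "H' \<subseteq> H" "good m H'" "card H \<le> card H' + m * card (pairs H)"
    using deletion[OF finH H3] by blast
  have "m * card (pairs H) \<le> m * (n choose 2)" using pairs_card[OF H] by simp
  also have "\<dots> \<le> 3 * (k + 1) * n ^ 2" using arith_bound[OF m6] .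
  finally have mp: "m * card (pairs H) \<le> 3 * (k + 1) * n ^ 2" . have big': "3 * (k + 1) * n ^ 2 < card H" using big k_def by simp
  have "0 < card H'" using H'(3) mp big' by linarith
  then obtain h0 where h0: "h0 \<in> H'" by (metis card.empty ex_in_conv less_irrefl)
  have H'3: "\<forall>h\<in>H'. card h = 3" using H3 H'(1) by auto
  have finH': "finite H'" using H'(1) finH finite_subset by blast
  obtain x0 y0 z0 where xyz: "h0 = {x0,y0,z0}" using H'3 h0 card_3_iff by metis
  have z0: "z0 \<in> Lk H' {x0,y0}" using h0 xyz unfolding Lk_def by (simp add: insert_commute)
  define U where "U = VF - {b}"
  have bVF: "b \<in> VF" "a \<in> VF" using e ab by auto
  have "card U < card VF" unfolding U_def using bVF finVF by (intro card_Diff1_less)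
  then have cU: "card U < m" using m_def by simp
  obtain \<phi> where ph: "inj_on \<phi> U" "\<forall>u\<in>U. Lk H' {\<phi> u, y0} \<noteq> {} \<and> \<phi> u \<noteq> y0"
     "\<forall>u\<in>U. \<forall>w\<in>U. {u,w} \<in> E \<longrightarrow> Lk H' {\<phi> u, \<phi> w} \<noteq> {}"
    using embed[OF nc E2 H'(2) H'3 finH' z0, of U] cU finVF U_def by auto
  define \<Phi> where "\<Phi> = \<phi>(b := y0)"
  have PU: "\<And>u. u \<in> U \<Longrightarrow> \<Phi> u = \<phi> u" unfolding \<Phi>_def U_def by auto
  have Pb: "\<Phi> b = y0" unfolding \<Phi>_def by simp
  have VFU: "VF = insert b U" using bVF U_def by auto
  have injP: "inj_on \<Phi> VF"
    unfolding VFU \<Phi>_def using ph(1,2) U_def by (auto simp: inj_on_def)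
  have UH': "\<forall>h\<in>H'. h \<subseteq> {..<n}" using H'(1) H unfolding three_graph_on_def by auto
  have PVn: "\<Phi> v \<in> {..<n}" if "v \<in> VF" for v
  proof (cases "v = b")
    case True
    then show ?thesis using Pb UH' h0 xyz by auto
  next
    case False
    then have "v \<in> U" using that U_def by auto
    then obtain z where "insert z {\<phi> v, y0} \<in> H'" using ph(2) unfolding Lk_def by auto
    then show ?thesis using UH' PU \<open>v \<in> U\<close> by auto
  qed
  have EV: "\<And>g. g \<in> E \<Longrightarrow> g \<subseteq> VF" using gV e by auto
  have edge: "\<exists>x y. \<Phi> ` g = {x,y} \<and> Lk H' {x,y} \<noteq> {}" if g: "g \<in> EF" for g
  proof (cases "g = e")
    case True
    have aU: "a \<in> U" using ab bVF U_def by auto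
    have "\<Phi> ` g = {\<phi> a, y0}" using True ab PU[OF aU] Pb by auto
    then show ?thesis using ph(2) aU by blast
  next
    case False
    then have gE: "g \<in> E" using g e by auto
    then obtain u w where uw: "g = {u,w}" "u \<noteq> w" using E2 card_2_iff by metis
    have uwV: "u \<in> VF" "w \<in> VF" using EV[OF gE] uw by auto
    show ?thesis
    proof (cases "u = b")
      case True
      then have wU: "w \<in> U" using uw uwV U_def by auto
      have "\<Phi> ` g = {\<phi> w, y0}" using uw True PU[OF wU] Pb by auto
      then show ?thesis using ph(2) wU by blast
    next
      case False
      note ub = False
      show ?thesis
      proof (cases "w = b")
        case True
        then have uU: "u \<in> U" using ub uwV U_def by auto
        have "\<Phi> ` g = {\<phi> u, y0}" using uw True PU[OF uU] Pb by auto
        then show ?thesis using ph(2) uU by blast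
      next
        case False
        then have uU: "u \<in> U" "w \<in> U" using ub uwV U_def by auto
        have "\<Phi> ` g = {\<phi> u, \<phi> w}" using uw PU[OF uU(1)] PU[OF uU(2)] by auto
        moreover have "Lk H' {\<phi> u, \<phi> w} \<noteq> {}" using ph(3) uU gE uw by simp
        ultimately show ?thesis by blast
      qed
    qed
  qed
  have cardA: "card EF + card (\<Phi> ` VF) \<le> card (Lk H' (\<Phi> ` g))" if gEF: "g \<in> EF" for g
  proof -
    obtain x y where xy: "\<Phi> ` g = {x,y}" "Lk H' {x,y} \<noteq> {}" using edge[OF gEF] by blast
    have "m \<le> card (Lk H' {x,y})" using Lk_nonempty_card[OF H'(2) H'3 xy(2)] .
    moreover have "card (\<Phi> ` VF) \<le> card VF" using card_image_le[OF finVF] .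
    ultimately show ?thesis using xy m_def by simp
  qed
  obtain c where c: "inj_on c EF" "\<forall>g\<in>EF. c g \<in> Lk H' (\<Phi> ` g) \<and> c g \<notin> \<Phi> ` VF"
    using greedy[OF finEF finite_imageI[OF finVF], where A="\<lambda>g. Lk H' (\<Phi> ` g)"] cardA by blast
  define f where "f = case_sum \<Phi> c"
  show ?thesis
    unfolding contains_copy_def
  proof (intro exI[of _ f] conjI)
    show "inj_on f (exp3_vertices VF EF)"
    proof (rule inj_onI)
      fix x y assume x: "x \<in> exp3_vertices VF EF" and y: "y \<in> exp3_vertices VF EF" and eq: "f x = f y"
      have cn: "\<forall>g\<in>EF. c g \<notin> \<Phi> ` VF" using c(2) by blast
      from x y show "x = y" unfolding exp3_vertices_def
      proof (elim UnE imageE)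
        fix v w assume "v \<in> VF" "x = Inl v" "w \<in> VF" "y = Inl w"
        then show ?thesis using eq injP unfolding f_def inj_on_def by simp
      next
        fix v g assume "v \<in> VF" "x = Inl v" "g \<in> EF" "y = Inr g"
        then show ?thesis using eq cn unfolding f_def by force
      next
        fix v g assume "g \<in> EF" "x = Inr g" "v \<in> VF" "y = Inl v"
        then show ?thesis using eq cn unfolding f_def by force
      next
        fix g g' assume "g \<in> EF" "x = Inr g" "g' \<in> EF" "y = Inr g'"
        then show ?thesis using eq c(1) unfolding f_def inj_on_def by simp
      qed
    qed
    show "f ` exp3_vertices VF EF \<subseteq> {..<n}"
    proof
      fix y assume "y \<in> f ` exp3_vertices VF EF"
      then consider v where "v \<in> VF" "y = \<Phi> v" | g where "g \<in> EF" "y = c g"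
        unfolding exp3_vertices_def f_def by auto
      then show "y \<in> {..<n}"
      proof cases
        case 1 then show ?thesis using PVn by auto
      next
        case 2
        then have "insert y (\<Phi> ` g) \<in> H'" using c unfolding Lk_def by auto
        then show ?thesis using UH' by auto
      qed
    qed
    show "\<forall>g'\<in>exp3_edges EF. f ` g' \<in> H"
    proof
      fix g' assume "g' \<in> exp3_edges EF"
      then obtain g where g: "g \<in> EF" "g' = insert (Inr g) (Inl ` g)" unfolding exp3_edges_def by auto
      have "f ` g' = insert (c g) (\<Phi> ` g)" using g unfolding f_def by (auto simp: image_image)
      moreover have "insert (c g) (\<Phi> ` g) \<in> H'" using c g unfolding Lk_def by auto
      ultimately show "f ` g' \<in> H" using H'(1) by auto
    qed
  qed
qed



theorem proposition4p1:
  fixes V VF :: "'a set" and E EF :: "'a set set"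
  assumes "is_tree V E"
    and "is_augmentation V E VF EF"
  shows "\<exists>N. \<forall>n\<ge>N. ex3 n (exp3_vertices VF EF) (exp3_edges EF) \<le> 3 * (card E + 1) * n ^ 2"
proof (intro exI[of _ 0] allI impI)
  fix n :: nat
  define S where "S = {card H |H. three_graph_on n H \<and> \<not> contains_copy {..<n} H (exp3_vertices VF EF) (exp3_edges EF)}"
  have EFne: "exp3_edges EF \<noteq> {}"
    using assms(2) unfolding is_augmentation_def exp3_edges_def by auto
  have "0 \<in> S"
  proof -
    have "three_graph_on n {}" by (simp add: three_graph_on_def)
    moreover have "\<not> contains_copy {..<n} {} (exp3_vertices VF EF) (exp3_edges EF)"
      using EFne unfolding contains_copy_def by auto
    ultimately show ?thesis unfolding S_def by force
  qed
  have fin: "finite S"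
  proof -
    have "S \<subseteq> {..card (Pow {..<n::nat})}"
    proof
      fix x assume "x \<in> S"
      then obtain H where H: "x = card H" "three_graph_on n H" unfolding S_def by auto
      have "H \<subseteq> Pow {..<n}" using H(2) unfolding three_graph_on_def by auto
      then have "card H \<le> card (Pow {..<n})" by (intro card_mono) auto
      then show "x \<in> {..card (Pow {..<n::nat})}" using H by simp
    qed
    then show ?thesis using finite_subset by blast
  qed
  have "\<forall>x\<in>S. x \<le> 3 * (card E + 1) * n ^ 2"
  proof
    fix x assume "x \<in> S"
    then obtain H where H: "x = card H" "three_graph_on n H"
      "\<not> contains_copy {..<n} H (exp3_vertices VF EF) (exp3_edges EF)" unfolding S_def by auto
    show "x \<le> 3 * (card E + 1) * n ^ 2"
      using copy_exists[OF assms H(2)] H(1,3) by (meson not_le)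
  qed
  then show "ex3 n (exp3_vertices VF EF) (exp3_edges EF) \<le> 3 * (card E + 1) * n ^ 2"
    unfolding ex3_def S_def[symmetric] using fin \<open>0 \<in> S\<close> Max_le_iff[OF fin] by blast
qed

end
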